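(* Let $\{(u_{0,n},u_{1,n})\}_n$ be a bounded sequence in $\dot H^1\times L^2(\mathbb{R}^N)$ with a profile decomposition $(U_L^j,\{\lambda_{j,n},x_{j,n},t_{j,n}\}_n)_{j\geq1}$ and nonlinear profiles $U^j$. Then one can extract subsequences in $n$ so that the binary relation $\preceq$ on indices is a total preorder, that is: (1) $(j)\simeq(j)$ for all $j$; (2) if $(j)\preceq(k)$ and $(k)\preceq(\ell)$ then $(j)\preceq(\ell)$; (3) for all $j,k$, $(j)\preceq(k)$ or $(k)\preceq(j)$; (4) $(j)\prec(k)$ is equivalent to [$(j)\preceq(k)$ and not $(j)\simeq(k)$].
   Context: $N\in\{3,4,5\}$; the nonlinear equation is $\partial_t^2u-\Delta u-|u|^{\frac4{N-2}}u=0$, locally well-posed in $\dot H^1\times L^2$; $S(I)=L^{\frac{2(N+1)}{N-2}}(I\times\mathbb{R}^N)$; a solution scatters forward in time if its $S$-norm on $[0,T_+)$ is finite. Profile decomposition: $U_L^j$ finite-energy solutions of the linear wave equation, parameters orthogonal (for $j\ne k$, $\lim_n|\log\frac{\lambda_{j,n}}{\lambda_{k,n}}|+\frac{|t_{j,n}-t_{k,n}|}{\lambda_{j,n}}+\frac{|x_{j,n}-x_{k,n}|}{\lambda_{j,n}}=\infty$), and $\lim_J\limsup_n\|S_L(t)(u_{0,n},u_{1,n})-\sum_{j\le J}\lambda_{j,n}^{-\frac N2+1}U_L^j(\frac{t-t_{j,n}}{\lambda_{j,n}},\frac{x-x_{j,n}}{\lambda_{j,n}})\|_{S(\mathbb{R})}=0$.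 Extracting subsequences, $-t_{j,n}/\lambda_{j,n}$ has a limit in $[-\infty,\infty]$ for each $j$; the nonlinear profile $U^j$ is the unique solution of the nonlinear equation with $-t_{j,n}/\lambda_{j,n}$ in its maximal interval for large $n$ and $\lim_n\|(U_L^j,\partial_tU_L^j)(-t_{j,n}/\lambda_{j,n})-(U^j,\partial_tU^j)(-t_{j,n}/\lambda_{j,n})\|_{\dot H^1\times L^2}=0$. Relation: $(j)\preceq(k)$ if either $U^k$ scatters forward in time, or $U^j$ does not scatter forward in time and for all $T<T_+(U^j)$, $\lim_n\frac{\lambda_{j,n}T+t_{j,n}-t_{k,n}}{\lambda_{k,n}}<T_+(U^k)$ (subsequences are extracted so that these limits exist). $(j)\simeq(k)$ means $(j)\preceq(k)$ and $(k)\preceq(j)$; $(j)\prec(k)$ means that $(k)\preceq(j)$ does not hold. *)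

theory Defs
  imports "HOL-Analysis.Analysis"
begin

definition pd :: "'a::euclidean_space \<Rightarrow> ('a \<Rightarrow> real) \<Rightarrow> 'a \<Rightarrow> real" where
  "pd v \<phi> = (\<lambda>x. frechet_derivative \<phi> (at x) v)"

definition smooth_fun :: "('a::euclidean_space \<Rightarrow> real) \<Rightarrow> bool" where
  "smooth_fun \<phi> \<longleftrightarrow> (\<forall>ds. set ds \<subseteq> Basis \<longrightarrow> foldr pd ds \<phi> differentiable_on UNIV)"

definition test_fun :: "'a::euclidean_space set \<Rightarrow> ('a \<Rightarrow> real) \<Rightarrow> bool" where
  "test_fun O' \<phi> \<longleftrightarrow> smooth_fun \<phi> \<and> compact (closure {x. \<phi> x \<noteq> 0})
      \<and> closure {x. \<phi> x \<noteq> 0} \<subseteq> O'"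

definition Lp_int :: "real \<Rightarrow> ('a::euclidean_space \<Rightarrow> real) \<Rightarrow> ennreal" where
  "Lp_int p f = (\<integral>\<^sup>+x. ennreal (\<bar>f x\<bar> powr p) \<partial>lborel)"

definition in_Lp :: "real \<Rightarrow> ('a::euclidean_space \<Rightarrow> real) \<Rightarrow> bool" where
  "in_Lp p f \<longleftrightarrow> f \<in> borel_measurable lborel \<and> Lp_int p f < \<infinity>"

definition Lp_norm :: "real \<Rightarrow> ('a::euclidean_space \<Rightarrow> real) \<Rightarrow> real" where
  "Lp_norm p f = enn2real (Lp_int p f) powr (1 / p)"

definition weak_grad :: "(real^'n \<Rightarrow> real) \<Rightarrow> (real^'n \<Rightarrow> real^'n) \<Rightarrow> bool" where
  "weak_grad f g \<longleftrightarrow> g \<in> borel_measurable lborel \<and>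
     (\<forall>\<phi>. test_fun UNIV \<phi> \<longrightarrow> (\<forall>i.
        (\<integral>x. f x * pd (axis i 1) \<phi> x \<partial>lborel) = - (\<integral>x. g x $ i * \<phi> x \<partial>lborel)))"

definition sob_exp :: "'n::finite itself \<Rightarrow> real" where
  "sob_exp _ = 2 * real CARD('n) / (real CARD('n) - 2)"

definition Hdot1 :: "(real^'n::finite \<Rightarrow> real) \<Rightarrow> bool" where
  "Hdot1 f \<longleftrightarrow> in_Lp (sob_exp TYPE('n)) f \<and>
      (\<exists>g. weak_grad f g \<and> in_Lp 2 (\<lambda>x. norm (g x)))"

definition grad :: "(real^'n::finite \<Rightarrow> real) \<Rightarrow> real^'n \<Rightarrow> real^'n" where
  "grad f = (SOME g. weak_grad f g \<and> in_Lp 2 (\<lambda>x. norm (g x)))"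

definition Hdot1_norm :: "(real^'n::finite \<Rightarrow> real) \<Rightarrow> real" where
  "Hdot1_norm f = Lp_norm 2 (\<lambda>x. norm (grad f x))"

text \<open>A norm on \<open>H1dot \<times> L2\<close> (equivalent to the usual one).\<close>
definition E_norm :: "(real^'n::finite \<Rightarrow> real) \<Rightarrow> (real^'n \<Rightarrow> real) \<Rightarrow> real" where
  "E_norm f0 f1 = Hdot1_norm f0 + Lp_norm 2 f1"

definition S_exp :: "'n::finite itself \<Rightarrow> real" where
  "S_exp _ = 2 * (real CARD('n) + 1) / (real CARD('n) - 2)"

text \<open>q-th power of the \<open>S(I)\<close> norm, \<open>q = 2(N+1)/(N-2)\<close>.\<close>
definition S_int :: "real set \<Rightarrow> (real \<Rightarrow> real^'n::finite \<Rightarrow> real) \<Rightarrow> ennreal" where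
  "S_int I u = (\<integral>\<^sup>+z. indicator (I \<times> UNIV) z * ennreal (\<bar>u (fst z) (snd z)\<bar> powr S_exp TYPE('n)) \<partial>lborel)"

definition lap :: "(real \<times> (real^'n::finite) \<Rightarrow> real) \<Rightarrow> real \<times> (real^'n) \<Rightarrow> real" where
  "lap \<psi> = (\<lambda>z. \<Sum>i\<in>UNIV. pd (0, axis i 1) (pd (0, axis i 1) \<psi>) z)"

definition dt :: "(real \<times> (real^'n::finite) \<Rightarrow> real) \<Rightarrow> real \<times> (real^'n) \<Rightarrow> real" where
  "dt \<psi> = pd (1, 0) \<psi>"

text \<open>\<open>wave_sol c I u v\<close>: \<open>(u, v = \<partial>_t u)\<close> is a finite-energy solution on the interval \<open>I\<close> of
  \<open>\<partial>_t^2 u - \<Delta> u - c |u|^{4/(N-2)} u = 0\<close> (\<open>c = 0\<close>: linear, \<open>c = 1\<close>: nonlinear equation),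
  in the energy/Strichartz class, in the sense of distributions.\<close>
definition wave_sol :: "real \<Rightarrow> real set \<Rightarrow> (real \<Rightarrow> real^'n::finite \<Rightarrow> real) \<Rightarrow> (real \<Rightarrow> real^'n \<Rightarrow> real) \<Rightarrow> bool" where
  "wave_sol c I u v \<longleftrightarrow>
     is_interval I \<and> open I \<and> I \<noteq> {} \<and>
     (\<lambda>z. u (fst z) (snd z)) \<in> borel_measurable lborel \<and>
     (\<lambda>z. v (fst z) (snd z)) \<in> borel_measurable lborel \<and>
     (\<forall>s\<in>I. Hdot1 (u s) \<and> in_Lp 2 (v s)) \<and>
     (\<forall>s\<in>I. ((\<lambda>s'. E_norm (\<lambda>x. u s' x - u s x) (\<lambda>x. v s' x - v s x)) \<longlongrightarrow> 0) (at s within I)) \<and>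
     (\<forall>J. compact J \<and> J \<subseteq> I \<longrightarrow> S_int J u < \<infinity>) \<and>
     (\<forall>\<psi>. test_fun (I \<times> UNIV) \<psi> \<longrightarrow>
        integrable lborel (\<lambda>z. u (fst z) (snd z) * dt \<psi> z + v (fst z) (snd z) * \<psi> z) \<and>
        (\<integral>z. u (fst z) (snd z) * dt \<psi> z + v (fst z) (snd z) * \<psi> z \<partial>lborel) = 0) \<and>
     (\<forall>\<psi>. test_fun (I \<times> UNIV) \<psi> \<longrightarrow>
        integrable lborel (\<lambda>z. - v (fst z) (snd z) * dt \<psi> z - u (fst z) (snd z) * lap \<psi> z
            - c * (\<bar>u (fst z) (snd z)\<bar> powr (4 / (real CARD('n) - 2)) * u (fst z) (snd z)) * \<psi> z) \<and>
        (\<integral>z. - v (fst z) (snd z) * dt \<psi> z - u (fst z) (snd z) * lap \<psi> z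
            - c * (\<bar>u (fst z) (snd z)\<bar> powr (4 / (real CARD('n) - 2)) * u (fst z) (snd z)) * \<psi> z \<partial>lborel) = 0)"

definition eint :: "ereal \<Rightarrow> ereal \<Rightarrow> real set" where
  "eint a b = {s. a < ereal s \<and> ereal s < b}"

definition maximal_sol :: "(real \<Rightarrow> real^'n::finite \<Rightarrow> real) \<Rightarrow> (real \<Rightarrow> real^'n \<Rightarrow> real) \<Rightarrow> ereal \<Rightarrow> ereal \<Rightarrow> bool" where
  "maximal_sol u v a b \<longleftrightarrow> a < b \<and> wave_sol 1 (eint a b) u v \<and>
     \<not> (\<exists>a' b' u' v'. a' \<le> a \<and> b \<le> b' \<and> (a' < a \<or> b < b') \<and>
          wave_sol 1 (eint a' b') u' v' \<and> (\<forall>s\<in>eint a b. u' s = u s \<and> v' s = v s))"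

definition scatters_fwd :: "(real \<Rightarrow> real^'n::finite \<Rightarrow> real) \<Rightarrow> ereal \<Rightarrow> ereal \<Rightarrow> bool" where
  "scatters_fwd u a b \<longleftrightarrow> (\<exists>t0. a < ereal t0 \<and> ereal t0 < b \<and> S_int {s. t0 \<le> s \<and> ereal s < b} u < \<infinity>)"

definition resc :: "real \<Rightarrow> real \<Rightarrow> real^'n::finite \<Rightarrow> (real \<Rightarrow> real^'n \<Rightarrow> real) \<Rightarrow> real \<Rightarrow> real^'n \<Rightarrow> real" where
  "resc l tn xn U = (\<lambda>s y. l powr (1 - real CARD('n) / 2) * U ((s - tn) / l) ((1 / l) *\<^sub>R (y - xn)))"

text \<open>\<open>prec_rel sc Tp lam t j k\<close> is \<open>(j) \<preceq> (k)\<close>; \<open>sc k\<close>: \<open>U^k\<close> scatters forward; \<open>Tp k = T_+(U^k)\<close>.\<close>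
definition prec_rel :: "(nat \<Rightarrow> bool) \<Rightarrow> (nat \<Rightarrow> ereal) \<Rightarrow> (nat \<Rightarrow> nat \<Rightarrow> real) \<Rightarrow> (nat \<Rightarrow> nat \<Rightarrow> real) \<Rightarrow> nat \<Rightarrow> nat \<Rightarrow> bool" where
  "prec_rel sc Tp lam t j k \<longleftrightarrow> sc k \<or>
     (\<not> sc j \<and> (\<forall>T. ereal T < Tp j \<longrightarrow>
        lim (\<lambda>n. ereal ((lam j n * T + t j n - t k n) / lam k n)) < Tp k))"

end

theory Submission
  imports Defs "HOL-Library.Diagonal_Subsequence"
begin

lemma ereal_subseq:
  fixes s :: "nat \<Rightarrow> real"
  shows "\<exists>r L. strict_mono r \<and> ((\<lambda>n. ereal (s (r n))) \<longlonglongrightarrow> L)"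
proof -
  obtain f where f: "strict_mono f" "monoseq (\<lambda>n. s (f n))" using seq_monosub by blast
  show ?thesis
  proof (cases "incseq (\<lambda>n. s (f n))")
    case True
    then have "incseq (\<lambda>n. ereal (s (f n)))" by (simp add: incseq_def)
    then show ?thesis using f LIMSEQ_SUP by blast
  next
    case False
    then have "decseq (\<lambda>n. s (f n))" using f(2) by (simp add: monoseq_iff)
    then have "decseq (\<lambda>n. ereal (s (f n)))" by (simp add: decseq_def)
    then show ?thesis using f LIMSEQ_INF by blast
  qed
qed

lemma ereal_subseq2:
  fixes s :: "nat \<Rightarrow> real" and q :: "nat \<Rightarrow> nat"
  assumes "strict_mono q"
  shows "\<exists>r L. strict_mono r \<and> strict_mono (q \<circ> r) \<and> ((\<lambda>n. ereal (s (q (r n)))) \<longlonglongrightarrow> L)"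
  using ereal_subseq[of "\<lambda>n. s (q n)"] assms strict_mono_o by blast

lemma affine_subseq:
  fixes a b :: "nat \<Rightarrow> real"
  shows "\<exists>r. strict_mono r \<and> (\<forall>T. convergent (\<lambda>n. ereal (T * a (r n) + b (r n))))"
proof -
  obtain r1 A where r1: "strict_mono r1" "(\<lambda>n. ereal (a (r1 n))) \<longlonglongrightarrow> A"
    using ereal_subseq by blast
  obtain r2 B where r2: "strict_mono r2" "strict_mono (r1 \<circ> r2)" "(\<lambda>n. ereal (b (r1 (r2 n)))) \<longlonglongrightarrow> B"
    using ereal_subseq2[OF r1(1)] by blast
  obtain r3 C where r3: "strict_mono r3" "strict_mono (r1 \<circ> r2 \<circ> r3)"
     "(\<lambda>n. ereal (b ((r1 \<circ> r2) (r3 n)) / a ((r1 \<circ> r2) (r3 n)))) \<longlonglongrightarrow> C"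
    using ereal_subseq2[OF r2(2), of "\<lambda>n. b n / a n"] by (auto simp: o_assoc)
  define c where "c = real_of_ereal C"
  obtain r4 D where r4: "strict_mono r4" "strict_mono (r1 \<circ> r2 \<circ> r3 \<circ> r4)"
     "(\<lambda>n. ereal (b ((r1 \<circ> r2 \<circ> r3) (r4 n)) - c * a ((r1 \<circ> r2 \<circ> r3) (r4 n)))) \<longlonglongrightarrow> D"
    using ereal_subseq2[OF r3(2), of "\<lambda>n. b n - c * a n"] by (auto simp: o_assoc)
  define r where "r = r1 \<circ> r2 \<circ> r3 \<circ> r4"
  have m1: "strict_mono (r2 \<circ> r3 \<circ> r4)" using r2(1) r3(1) r4(1) by (intro strict_mono_o)
  have m2: "strict_mono (r3 \<circ> r4)" using r3(1) r4(1) by (intro strict_mono_o)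
  have sA: "(\<lambda>n. ereal (a (r n))) \<longlonglongrightarrow> A"
    using LIMSEQ_subseq_LIMSEQ[OF r1(2) m1]
    by (simp add: r_def o_def)
  have sB: "(\<lambda>n. ereal (b (r n))) \<longlonglongrightarrow> B"
    using LIMSEQ_subseq_LIMSEQ[OF r2(3) m2]
    by (simp add: r_def o_def)
  have sC: "(\<lambda>n. ereal (b (r n) / a (r n))) \<longlonglongrightarrow> C"
    using LIMSEQ_subseq_LIMSEQ[OF r3(3), of "r4"] r4(1)
    by (simp add: r_def o_def)
  have sD: "(\<lambda>n. ereal (b (r n) - c * a (r n))) \<longlonglongrightarrow> D"
    using r4(3) by (simp add: r_def o_def)
  have "\<forall>T. convergent (\<lambda>n. ereal (T * a (r n) + b (r n)))"
  proof
    fix T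
    show "convergent (\<lambda>n. ereal (T * a (r n) + b (r n)))"
    proof (cases "\<bar>A\<bar> = \<infinity>")
      case False
      have "(\<lambda>n. ereal T * ereal (a (r n))) \<longlonglongrightarrow> ereal T * A"
        by (rule tendsto_mult_ereal[OF tendsto_const sA]) (use False in auto)
      then have "(\<lambda>n. ereal T * ereal (a (r n)) + ereal (b (r n))) \<longlonglongrightarrow> ereal T * A + B"
        by (intro tendsto_add_ereal_general2[OF _ _ sB]) (use False in auto)
      then show ?thesis unfolding convergent_def by auto
    next
      case True
      have ev: "eventually (\<lambda>n. a (r n) \<noteq> 0) sequentially"
      proof -
        have "eventually (\<lambda>n. ereal (a (r n)) \<noteq> ereal 0) sequentially"
          using sA True by (intro tendsto_imp_eventually_ne) auto
        then show ?thesis by simp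
      qed
      have eq: "eventually (\<lambda>n. ereal (a (r n)) * (ereal T + ereal (b (r n) / a (r n))) = ereal (T * a (r n) + b (r n))) sequentially"
        using ev by eventually_elim (simp add: field_simps)
      show ?thesis
      proof (cases "T + C = 0")
        case False
        have tc: "(\<lambda>n. ereal T + ereal (b (r n) / a (r n))) \<longlonglongrightarrow> ereal T + C"
          by (intro tendsto_add_ereal_general2[OF _ _ sC]) auto
        have "(\<lambda>n. ereal (a (r n)) * (ereal T + ereal (b (r n) / a (r n)))) \<longlonglongrightarrow> A * (ereal T + C)"
          by (rule tendsto_mult_ereal[OF sA tc]) (use False True in auto)
        then have "(\<lambda>n. ereal (T * a (r n) + b (r n))) \<longlonglongrightarrow> A * (ereal T + C)"
          using eq by (rule Lim_transform_eventually)
        then show ?thesis unfolding convergent_def by auto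
      next
        case True
        then have "C = ereal (- T)"
          by (cases C) (auto simp: ereal_plus_eq_PInfty)
        then have "c = - T" by (simp add: c_def)
        then show ?thesis using sD unfolding convergent_def by (auto simp: algebra_simps)
      qed
    qed
  qed
  moreover have "strict_mono r" using r4(2) by (simp add: r_def)
  ultimately show ?thesis by blast
qed

lemma diag_conv:
  fixes lam t :: "nat \<Rightarrow> nat \<Rightarrow> real"
  shows "\<exists>r. strict_mono r \<and> (\<forall>j k T. convergent (\<lambda>n. ereal ((lam j (r n) * T + t j (r n) - t k (r n)) / lam k (r n))))"
proof -
  define F where "F i n T = (lam (fst (prod_decode i)) n * T + t (fst (prod_decode i)) n - t (snd (prod_decode i)) n) / lam (snd (prod_decode i)) n" for i n T
  define P where "P i s = (\<forall>T. convergent (\<lambda>m. ereal (F i (s m) T)))" for i and s :: "nat \<Rightarrow> nat"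
  have affine: "F i n T = T * (lam (fst (prod_decode i)) n / lam (snd (prod_decode i)) n)
      + (t (fst (prod_decode i)) n - t (snd (prod_decode i)) n) / lam (snd (prod_decode i)) n" for i n T
    unfolding F_def by (simp add: add_divide_distrib diff_divide_distrib)
  interpret subseqs P
  proof
    fix i and s :: "nat \<Rightarrow> nat" assume "strict_mono s"
    obtain r where "strict_mono r" and cv: "\<forall>T. convergent (\<lambda>n. ereal (T * (\<lambda>m. lam (fst (prod_decode i)) (s m) / lam (snd (prod_decode i)) (s m)) (r n)
       + (\<lambda>m. (t (fst (prod_decode i)) (s m) - t (snd (prod_decode i)) (s m)) / lam (snd (prod_decode i)) (s m)) (r n)))"
      using affine_subseq[of "\<lambda>m. lam (fst (prod_decode i)) (s m) / lam (snd (prod_decode i)) (s m)"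
          "\<lambda>m. (t (fst (prod_decode i)) (s m) - t (snd (prod_decode i)) (s m)) / lam (snd (prod_decode i)) (s m)"] by auto
    then show "\<exists>r'. strict_mono r' \<and> P i (s \<circ> r')"
      unfolding P_def by (intro exI[of _ r]) (simp add: affine)
  qed
  have stable: "strict_mono r \<Longrightarrow> P n s \<Longrightarrow> P n (s \<circ> r)" for r s n
    unfolding P_def using convergent_subseq_convergent[of _ r] by (auto simp: o_def)
  obtain D where D: "D = diagseq" by blast
  have hD: "P i (D \<circ> ((+) (Suc i)))" for i unfolding D by (rule diagseq_holds[OF stable])
  have sD: "strict_mono D" unfolding D by (rule subseq_diagseq)
  have hold: "P i D" for i
  proof -
    have "P i (D \<circ> ((+) (Suc i)))" by (rule hD)
    then show ?thesis unfolding P_def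
      using convergent_ignore_initial_segment[of "\<lambda>m. ereal (F i (D m) T)" "Suc i" for T]
      by (simp add: o_def add.commute)
  qed
  have "convergent (\<lambda>n. ereal ((lam j (D n) * T + t j (D n) - t k (D n)) / lam k (D n)))" for j k T
    using hold[of "prod_encode (j, k)"] unfolding P_def F_def by simp
  then show ?thesis using sD by blast
qed

lemma trans_step:
  fixes lam t :: "nat \<Rightarrow> nat \<Rightarrow> real"
  assumes cv1: "convergent (\<lambda>n. ereal ((lam j n * T + t j n - t k n) / lam k n))"
    and cv2: "convergent (\<lambda>n. ereal ((lam k n * T' + t k n - t l n) / lam l n))"
    and cv3: "convergent (\<lambda>n. ereal ((lam j n * T + t j n - t l n) / lam l n))"
    and pk: "\<forall>n. lam k n > 0" and pl: "\<forall>n. lam l n > 0"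
    and lt: "lim (\<lambda>n. ereal ((lam j n * T + t j n - t k n) / lam k n)) < ereal T'"
  shows "lim (\<lambda>n. ereal ((lam j n * T + t j n - t l n) / lam l n))
       \<le> lim (\<lambda>n. ereal ((lam k n * T' + t k n - t l n) / lam l n))"
proof -
  have "eventually (\<lambda>n. ereal ((lam j n * T + t j n - t k n) / lam k n) < ereal T') sequentially"
    using order_tendstoD(2)[OF cv1[unfolded convergent_LIMSEQ_iff] lt] .
  then have "eventually (\<lambda>n. ereal ((lam j n * T + t j n - t l n) / lam l n)
       \<le> ereal ((lam k n * T' + t k n - t l n) / lam l n)) sequentially"
  proof eventually_elim
    case (elim n)
    then have "lam j n * T + t j n - t k n < T' * lam k n"
      using pk by (simp add: pos_divide_less_eq)
    then show ?case using pl
      by (subst ereal_less_eq(3), intro divide_right_mono) (auto simp: algebra_simps less_imp_le)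
  qed
  then show ?thesis
    by (intro tendsto_le[OF _ cv2[unfolded convergent_LIMSEQ_iff] cv3[unfolded convergent_LIMSEQ_iff]]) auto
qed

lemma total_step:
  fixes lam t :: "nat \<Rightarrow> nat \<Rightarrow> real"
  assumes cv1: "convergent (\<lambda>n. ereal ((lam j n * T0 + t j n - t k n) / lam k n))"
    and cv2: "convergent (\<lambda>n. ereal ((lam k n * T + t k n - t j n) / lam j n))"
    and pk: "\<forall>n. lam k n > 0" and pj: "\<forall>n. lam j n > 0"
    and lt: "ereal T < lim (\<lambda>n. ereal ((lam j n * T0 + t j n - t k n) / lam k n))"
  shows "lim (\<lambda>n. ereal ((lam k n * T + t k n - t j n) / lam j n)) \<le> ereal T0"
proof -
  have "eventually (\<lambda>n. ereal T < ereal ((lam j n * T0 + t j n - t k n) / lam k n)) sequentially"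
    using order_tendstoD(1)[OF cv1[unfolded convergent_LIMSEQ_iff] lt] .
  then have "eventually (\<lambda>n. ereal ((lam k n * T + t k n - t j n) / lam j n) \<le> ereal T0) sequentially"
  proof eventually_elim
    case (elim n)
    then have "T * lam k n < lam j n * T0 + t j n - t k n"
      using pk by (simp add: pos_less_divide_eq)
    then show ?case using pj
      by (simp add: pos_divide_le_eq algebra_simps)
  qed
  then show ?thesis
    by (intro tendsto_le[OF _ tendsto_const cv2[unfolded convergent_LIMSEQ_iff]]) auto
qed

lemma preorder_props:
  fixes lam t :: "nat \<Rightarrow> nat \<Rightarrow> real" and sc :: "nat \<Rightarrow> bool" and Tp :: "nat \<Rightarrow> ereal"
  assumes cv: "\<forall>j k T. convergent (\<lambda>n. ereal ((lam j n * T + t j n - t k n) / lam k n))"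
    and pos: "\<forall>j\<ge>1. \<forall>n. lam j n > 0"
  shows "let P = prec_rel sc Tp lam t in
      (\<forall>j\<ge>1. P j j \<and> P j j) \<and>
      (\<forall>j\<ge>1. \<forall>k\<ge>1. \<forall>l\<ge>1. P j k \<and> P k l \<longrightarrow> P j l) \<and>
      (\<forall>j\<ge>1. \<forall>k\<ge>1. P j k \<or> P k j) \<and>
      (\<forall>j\<ge>1. \<forall>k\<ge>1. (\<not> P k j) \<longleftrightarrow> (P j k \<and> \<not> (P j k \<and> P k j)))"
proof -
  define L where "L j k T = lim (\<lambda>n. ereal ((lam j n * T + t j n - t k n) / lam k n))" for j k T
  have Pdef: "prec_rel sc Tp lam t j k \<longleftrightarrow> sc k \<or> (\<not> sc j \<and> (\<forall>T. ereal T < Tp j \<longrightarrow> L j k T < Tp k))" for j k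
    unfolding prec_rel_def L_def ..
  have refl: "prec_rel sc Tp lam t j j" if "j \<ge> 1" for j
  proof -
    have "L j j T = ereal T" for T
    proof -
      have "(\<lambda>n. ereal ((lam j n * T + t j n - t j n) / lam j n)) = (\<lambda>n. ereal T)"
      proof (rule ext)
        fix n have "lam j n > 0" using pos that by auto
        then show "ereal ((lam j n * T + t j n - t j n) / lam j n) = ereal T" by simp
      qed
      then show ?thesis unfolding L_def by (simp add: limI)
    qed
    then show ?thesis unfolding Pdef by auto
  qed
  have trans: "prec_rel sc Tp lam t j l" if "j \<ge> 1" "k \<ge> 1" "l \<ge> 1"
    "prec_rel sc Tp lam t j k" "prec_rel sc Tp lam t k l" for j k l
  proof (cases "sc l")
    case True then show ?thesis unfolding Pdef by auto
  next
    case False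
    with that(5) have nk: "\<not> sc k" and B: "\<forall>T'. ereal T' < Tp k \<longrightarrow> L k l T' < Tp l"
      unfolding Pdef by auto
    with that(4) have nj: "\<not> sc j" and A: "\<forall>T. ereal T < Tp j \<longrightarrow> L j k T < Tp k"
      unfolding Pdef by auto
    have "L j l T < Tp l" if T: "ereal T < Tp j" for T
    proof -
      obtain T' where T': "L j k T < ereal T'" "ereal T' < Tp k"
        using ereal_dense2[OF A[rule_format, OF T]] by blast
      have "L j l T \<le> L k l T'"
        unfolding L_def
        by (rule trans_step[OF cv[rule_format] cv[rule_format] cv[rule_format]])
           (use pos \<open>k \<ge> 1\<close> \<open>l \<ge> 1\<close> T'(1) in \<open>auto simp: L_def\<close>)
      also have "\<dots> < Tp l" using B T'(2) by auto
      finally show ?thesis .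
    qed
    then show ?thesis unfolding Pdef using nj by auto
  qed
  have total: "prec_rel sc Tp lam t j k \<or> prec_rel sc Tp lam t k j" if "j \<ge> 1" "k \<ge> 1" for j k
  proof (cases "sc j \<or> sc k")
    case True then show ?thesis unfolding Pdef by auto
  next
    case False
    show ?thesis
    proof (cases "\<forall>T. ereal T < Tp j \<longrightarrow> L j k T < Tp k")
      case True then show ?thesis unfolding Pdef using False by auto
    next
      case False2: False
      then obtain T0 where T0: "ereal T0 < Tp j" "\<not> L j k T0 < Tp k" by auto
      have "L k j T < Tp j" if T: "ereal T < Tp k" for T
      proof -
        have lt: "ereal T < L j k T0" using T T0(2) by auto
        have "L k j T \<le> ereal T0"
          unfolding L_def
          by (rule total_step[OF cv[rule_format] cv[rule_format]])
             (use pos \<open>k \<ge> 1\<close> \<open>j \<ge> 1\<close> lt in \<open>auto simp: L_def\<close>)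
        also have "\<dots> < Tp j" by (rule T0(1))
        finally show ?thesis .
      qed
      then show ?thesis unfolding Pdef using False by auto
    qed
  qed
  show ?thesis unfolding Let_def
    using refl trans total by blast
qed

theorem claim3p3:
  fixes u0 u1 :: "nat \<Rightarrow> real^'n::finite \<Rightarrow> real"
    and W Wt :: "nat \<Rightarrow> real \<Rightarrow> real^'n \<Rightarrow> real"
    and UL VL U V :: "nat \<Rightarrow> real \<Rightarrow> real^'n \<Rightarrow> real"
    and lam t :: "nat \<Rightarrow> nat \<Rightarrow> real"
    and x :: "nat \<Rightarrow> nat \<Rightarrow> real^'n"
    and Tm Tp :: "nat \<Rightarrow> ereal"
  assumes dim: "CARD('n) \<in> {3, 4, 5}"
    and bdd: "\<exists>C. \<forall>n. Hdot1 (u0 n) \<and> in_Lp 2 (u1 n) \<and> E_norm (u0 n) (u1 n) \<le> C"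
    and free: "\<forall>n. wave_sol 0 UNIV (W n) (Wt n) \<and> W n 0 = u0 n \<and> Wt n 0 = u1 n"
    and lin_prof: "\<forall>j\<ge>1. wave_sol 0 UNIV (UL j) (VL j)"
    and lam_pos: "\<forall>j\<ge>1. \<forall>n. lam j n > 0"
    and orth: "\<forall>j\<ge>1. \<forall>k\<ge>1. j \<noteq> k \<longrightarrow>
        filterlim (\<lambda>n. \<bar>ln (lam j n / lam k n)\<bar> + \<bar>t j n - t k n\<bar> / lam j n
                       + norm (x j n - x k n) / lam j n) at_top sequentially"
    and decomp: "((\<lambda>J. limsup (\<lambda>n. S_int UNIV (\<lambda>s y. W n s y
            - (\<Sum>j\<in>{1..J}. resc (lam j n) (t j n) (x j n) (UL j) s y)))) \<longlongrightarrow> 0) sequentially"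
    and conv: "\<forall>j\<ge>1. convergent (\<lambda>n. ereal (- t j n / lam j n))"
    and nonlin: "\<forall>j\<ge>1. maximal_sol (U j) (V j) (Tm j) (Tp j) \<and>
        eventually (\<lambda>n. - t j n / lam j n \<in> eint (Tm j) (Tp j)) sequentially \<and>
        ((\<lambda>n. E_norm (\<lambda>y. UL j (- t j n / lam j n) y - U j (- t j n / lam j n) y)
                       (\<lambda>y. VL j (- t j n / lam j n) y - V j (- t j n / lam j n) y)) \<longlongrightarrow> 0) sequentially"
  shows "\<exists>r::nat \<Rightarrow> nat. strict_mono r \<and>
    (\<forall>j\<ge>1. \<forall>k\<ge>1. \<forall>T. ereal T < Tp j \<longrightarrow>
        convergent (\<lambda>n. ereal ((lam j (r n) * T + t j (r n) - t k (r n)) / lam k (r n)))) \<and>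
    (let P = prec_rel (\<lambda>k. scatters_fwd (U k) (Tm k) (Tp k)) Tp
               (\<lambda>j n. lam j (r n)) (\<lambda>j n. t j (r n)) in
      (\<forall>j\<ge>1. P j j \<and> P j j) \<and>
      (\<forall>j\<ge>1. \<forall>k\<ge>1. \<forall>l\<ge>1. P j k \<and> P k l \<longrightarrow> P j l) \<and>
      (\<forall>j\<ge>1. \<forall>k\<ge>1. P j k \<or> P k j) \<and>
      (\<forall>j\<ge>1. \<forall>k\<ge>1. (\<not> P k j) \<longleftrightarrow> (P j k \<and> \<not> (P j k \<and> P k j))))"
  proof -
  obtain r where r: "strict_mono r"
    and cv: "\<forall>j k T. convergent (\<lambda>n. ereal ((lam j (r n) * T + t j (r n) - t k (r n)) / lam k (r n)))"
    using diag_conv[of lam t] by blast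
  have pos: "\<forall>j\<ge>1. \<forall>n. (\<lambda>j n. lam j (r n)) j n > 0" using lam_pos by auto
  have pp: "let P = prec_rel (\<lambda>k. scatters_fwd (U k) (Tm k) (Tp k)) Tp
               (\<lambda>j n. lam j (r n)) (\<lambda>j n. t j (r n)) in
      (\<forall>j\<ge>1. P j j \<and> P j j) \<and>
      (\<forall>j\<ge>1. \<forall>k\<ge>1. \<forall>l\<ge>1. P j k \<and> P k l \<longrightarrow> P j l) \<and>
      (\<forall>j\<ge>1. \<forall>k\<ge>1. P j k \<or> P k j) \<and>
      (\<forall>j\<ge>1. \<forall>k\<ge>1. (\<not> P k j) \<longleftrightarrow> (P j k \<and> \<not> (P j k \<and> P k j)))"
    by (rule preorder_props[OF _ pos]) (use cv in simp)
  show ?thesis using r cv pp by blast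
qed

end
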